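(* There is an absolute constant $d$ such that the following holds. Let $N>0$ and let $A,B\ge 0$ be integers with $A+B=N$. Let $X$ be chosen uniformly at random among all strings in $\{0,1\}^N$ with exactly $A$ ones and $B$ zeros. Then for every $r\ge 1$, $$\Pr_X\left[\,C_{OP}(X)\ \ge\ N-\tfrac{2}{3}\min(A,B)+d\sqrt{rN}\,\right]\ \le\ 2^{-r}\log N .$$
   Context: Logarithms are base $2$. The oblivious-pairing algorithm on input $X=X_0\cdots X_{N-1}\in\{0,1\}^N$ maintains a list $\mathcal S=(S_1,\dots,S_\ell)$ of disjoint subsets of $\{0,\dots,N-1\}$ ("blocks"), each known to be homogeneous (all bits of $X$ indexed by it are equal); $X_{S_j}$ denotes the common value of the bits in $S_j$. Initially $\mathcal S=(\{0\},\{1\},\dots,\{N-1\})$. The operation COMBINE$(\mathcal S,i)$ queries $X_a\oplus X_b$ for some $a\in S_i$, $b\in S_{i+1}$; if the answer is $0$ it replaces $S_i,S_{i+1}$ in the list by the single block $S_i\cup S_{i+1}$ (at that position), and otherwise it removes both $S_i$ and $S_{i+1}$ from the list. The algorithm runs, for $k=1,2,\dots,\lfloor\log N\rfloor$ in turn: while there exists $j$ with $1\le j<\ell$ and $|S_j|=|S_{j+1}|=2^{k-1}$, apply COMBINE$(\mathcal S,j)$ for the smallest such $j$. At the end it outputs "tie" if the list is empty and otherwise $X_{S_1}$. $C_{OP}(X)$ denotes the number of XOR queries (COMBINE operations) the oblivious-pairing algorithm makes on input $X$. *)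

theory Defs
  imports Complex_Main
begin

text \<open>Oblivious pairing. An input string X in {0,1}^N is a bool list of length N
  (True = 1). Blocks are sets of indices; the list of blocks is a list of nat sets.\<close>

text \<open>COMBINE on two adjacent blocks S, T: query X_a xor X_b for a = Min S, b = Min T.
  Answer 0 (equal bits): merge into S \<union> T; answer 1: remove both.\<close>
definition op_combine :: "bool list \<Rightarrow> nat set \<Rightarrow> nat set \<Rightarrow> nat set list" where
  "op_combine X S T = (if (X ! Min S) = (X ! Min T) then [S \<union> T] else [])"

fun op_step :: "bool list \<Rightarrow> nat \<Rightarrow> nat set list \<Rightarrow> nat set list option" where
  "op_step X s (S # T # rest) =
     (if card S = s \<and> card T = s then Some (op_combine X S T @ rest)
      else map_option ((#) S) (op_step X s (T # rest)))"
| "op_step X s _ = None"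

lemma op_step_length: "op_step X s L = Some L' \<Longrightarrow> length L' < length L"
  by (induction X s L arbitrary: L' rule: op_step.induct)
     (auto simp: op_combine_def split: if_splits)

function op_phase :: "bool list \<Rightarrow> nat \<Rightarrow> nat set list \<Rightarrow> nat set list \<times> nat" where
  "op_phase X s L = (case op_step X s L of
      None \<Rightarrow> (L, 0)
    | Some L' \<Rightarrow> (let (L'', c) = op_phase X s L' in (L'', Suc c)))"
  by pat_completeness auto
termination
  by (relation "measure (\<lambda>(X, s, L). length L)") (auto dest: op_step_length)

definition op_run :: "bool list \<Rightarrow> nat set list \<times> nat" where
  "op_run X = foldl (\<lambda>(L, c) k. let (L', c') = op_phase X (2 ^ (k - 1)) L in (L', c + c'))
      (map (\<lambda>i. {i}) [0..<length X], 0)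
      [1..<nat \<lfloor>log 2 (real (length X))\<rfloor> + 1]"

definition C_OP :: "bool list \<Rightarrow> nat" where
  "C_OP X = snd (op_run X)"

definition strings_with_ones :: "nat \<Rightarrow> nat \<Rightarrow> bool list set" where
  "strings_with_ones N A = {X. length X = N \<and> count_list X True = A}"

end

theory Submission
  imports Defs
begin

fun step :: "bool list \<Rightarrow> bool list" where
  "step (x # y # Y) = (if x = y then x # step Y else step Y)"
| "step _ = []"

definition blk :: "bool list \<Rightarrow> nat \<Rightarrow> nat set \<Rightarrow> bool \<Rightarrow> bool" where
  "blk X s B y \<longleftrightarrow> card B = s \<and> (\<forall>i\<in>B. X ! i = y)"

definition ordb :: "nat set list \<Rightarrow> bool" where
  "ordb L \<longleftrightarrow> sorted_wrt (\<lambda>S T. \<forall>x\<in>S. \<forall>y\<in>T. x < y) L"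

lemma op_step_skip: "card M \<noteq> s \<Longrightarrow> op_step X s (M # L) = map_option ((#) M) (op_step X s L)"
  by (cases L) auto

lemma op_step_none: "\<forall>B\<in>set L. card B < s \<Longrightarrow> op_step X s L = None"
  by (induction L) (auto simp: op_step_skip)

lemma op_step_none1: "card B = s \<Longrightarrow> \<forall>B\<in>set L. card B < s \<Longrightarrow> op_step X s (B # L) = None"
  by (cases L) (auto simp: op_step_none)

lemma op_step_pre: "\<forall>M\<in>set Ms. card M \<noteq> s \<Longrightarrow> op_step X s (Ms @ L) = map_option ((@) Ms) (op_step X s L)"
proof (induction Ms)
  case Nil
  then show ?case by (cases "op_step X s L") auto
next
  case (Cons a Ms)
  then show ?case by (cases "op_step X s L") (auto simp: op_step_skip)
qed

declare op_phase.simps [simp del]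

lemma op_phase_None: "op_step X s L = None \<Longrightarrow> op_phase X s L = (L, 0)"
  by (subst op_phase.simps) simp

lemma op_phase_Some: "op_step X s L = Some L' \<Longrightarrow> op_phase X s L = (fst (op_phase X s L'), Suc (snd (op_phase X s L')))"
  by (subst op_phase.simps) (simp add: case_prod_beta)

lemma blk_Min: "blk X s B y \<Longrightarrow> s > 0 \<Longrightarrow> X ! Min B = y"
  unfolding blk_def
  by (metis Min_in card_gt_0_iff)

lemma ordb_merge: "ordb (A @ B1 # B2 # C) \<Longrightarrow> ordb ((A @ [B1 \<union> B2]) @ C)"
  unfolding ordb_def sorted_wrt_append by auto

lemma ordb_drop2: "ordb (A @ B1 # B2 # C) \<Longrightarrow> ordb (A @ C)"
  unfolding ordb_def sorted_wrt_append by auto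

lemma op_phase_main:
  assumes "s > 0" "\<forall>M\<in>set Ms. card M = 2*s" "list_all2 (blk X s) Bs Y"
    "\<forall>B\<in>set Ls. card B < s" "ordb (Ms @ Bs @ Ls)"
  shows "\<exists>Ms' Od. op_phase X s (Ms @ Bs @ Ls) = (Ms @ Ms' @ Od @ Ls, length Y div 2)
     \<and> list_all2 (blk X (2*s)) Ms' (step Y) \<and> (\<forall>B\<in>set Od. card B = s) \<and> ordb (Ms @ Ms' @ Od @ Ls)"
  using assms
proof (induction Y arbitrary: Ms Bs rule: step.induct)
  case (1 x y Y)
  then obtain B1 B2 Bs' where Bs: "Bs = B1 # B2 # Bs'" and b1: "blk X s B1 x" and b2: "blk X s B2 y"
    and r: "list_all2 (blk X s) Bs' Y"
    by (auto simp: list_all2_Cons2)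
  have ms: "\<forall>M\<in>set Ms. card M \<noteq> s" using 1(3,4) by auto
  have c1: "card B1 = s" "card B2 = s" using b1 b2 by (auto simp: blk_def)
  have lt: "\<forall>u\<in>B1. \<forall>v\<in>B2. u < v" using 1(7) unfolding Bs ordb_def by (auto simp: sorted_wrt_append)
  have m1: "X ! Min B1 = x" "X ! Min B2 = y" using blk_Min b1 b2 1(3) by auto
  show ?case
  proof (cases "x = y")
    case True
    have st: "op_step X s (Ms @ Bs @ Ls) = Some ((Ms @ [B1 \<union> B2]) @ Bs' @ Ls)"
      unfolding Bs using ms c1 m1 True by (simp add: op_step_pre op_combine_def)
    have fin: "finite B1" "finite B2" using c1 1(3) by (auto intro: card_ge_0_finite)
    have disj: "B1 \<inter> B2 = {}" using lt by fastforce
    have bu: "blk X (2*s) (B1 \<union> B2) x" using b1 b2 True fin disj c1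
      by (auto simp: blk_def card_Un_disjoint)
    have o2: "ordb ((Ms @ [B1 \<union> B2]) @ Bs' @ Ls)"
      using ordb_merge[of Ms B1 B2 "Bs' @ Ls"] 1(7) unfolding Bs by simp
    have pre: "\<forall>M\<in>set (Ms @ [B1 \<union> B2]). card M = 2*s" using 1(4) bu by (auto simp: blk_def)
    from 1(1)[OF True 1(3) pre r 1(6) o2]
    obtain Ms' Od where IH: "op_phase X s ((Ms @ [B1 \<union> B2]) @ Bs' @ Ls) = ((Ms @ [B1 \<union> B2]) @ Ms' @ Od @ Ls, length Y div 2)"
      "list_all2 (blk X (2*s)) Ms' (step Y)" "\<forall>B\<in>set Od. card B = s" "ordb ((Ms @ [B1 \<union> B2]) @ Ms' @ Od @ Ls)"
      by blast
    show ?thesis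
      apply (rule exI[of _ "(B1 \<union> B2) # Ms'"], rule exI[of _ Od])
      using IH bu True by (simp add: op_phase_Some[OF st])
  next
    case False
    have st: "op_step X s (Ms @ Bs @ Ls) = Some (Ms @ Bs' @ Ls)"
      unfolding Bs using ms c1 m1 False by (simp add: op_step_pre op_combine_def)
    have o2: "ordb (Ms @ Bs' @ Ls)"
      using 1(7) unfolding Bs by (simp add: ordb_drop2)
    from 1(2)[OF False 1(3) 1(4) r 1(6) o2]
    obtain Ms' Od where IH: "op_phase X s (Ms @ Bs' @ Ls) = (Ms @ Ms' @ Od @ Ls, length Y div 2)"
      "list_all2 (blk X (2*s)) Ms' (step Y)" "\<forall>B\<in>set Od. card B = s" "ordb (Ms @ Ms' @ Od @ Ls)"
      by blast
    show ?thesis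
      apply (rule exI[of _ Ms'], rule exI[of _ Od])
      using IH False by (simp add: op_phase_Some[OF st])
  qed
next
  case ("2_1")
  then have "Bs = []" by simp
  moreover have "op_step X s (Ms @ Ls) = None"
    using "2_1" by (subst op_step_pre) (auto simp: op_step_none)
  ultimately show ?case using "2_1" by (auto simp: op_phase_None)
next
  case ("2_2" x)
  then obtain B where Bs: "Bs = [B]" "card B = s" by (auto simp: list_all2_Cons2 blk_def)
  have "op_step X s (Ms @ Bs @ Ls) = None"
    using "2_2" Bs by (subst op_step_pre) (auto simp: op_step_none1)
  then show ?case using "2_2" Bs
    by (intro exI[of _ "[]"] exI[of _ "[B]"]) (auto simp: op_phase_None)
qed

lemma run_main:
  assumes "k0 \<ge> 1" "list_all2 (blk X (2^(k0-1))) Bs Y" "\<forall>B\<in>set Ls. card B < 2^(k0-1)" "ordb (Bs @ Ls)"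
  shows "snd (foldl (\<lambda>(L, c) k. let (L', c') = op_phase X (2 ^ (k - 1)) L in (L', c + c')) (Bs @ Ls, c) [k0..<k0+j])
     = c + (\<Sum>i<j. length ((step^^i) Y) div 2)"
  using assms
proof (induction j arbitrary: k0 Bs Y Ls c)
  case 0
  then show ?case by simp
next
  case (Suc j)
  have "2^(k0-1) > (0::nat)" by simp
  from op_phase_main[OF this, of "[]" X Bs Y Ls] Suc.prems
  obtain Ms' Od where ph: "op_phase X (2^(k0-1)) (Bs @ Ls) = (Ms' @ Od @ Ls, length Y div 2)"
    and l2: "list_all2 (blk X (2*2^(k0-1))) Ms' (step Y)" and od: "\<forall>B\<in>set Od. card B = 2^(k0-1)"
    and o: "ordb (Ms' @ Od @ Ls)" by auto
  have e: "2 * 2^(k0-1) = (2::nat)^(Suc k0 - 1)" using Suc.prems(1)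
    by (cases k0) auto
  have up: "[k0..<k0 + Suc j] = k0 # [Suc k0..<Suc k0 + j]" by (simp add: upt_rec)
  have ls: "\<forall>B\<in>set (Od @ Ls). card B < 2^(Suc k0 - 1)"
    using od Suc.prems(3) e[symmetric] by auto
  have IH: "snd (foldl (\<lambda>(L, c) k. let (L', c') = op_phase X (2 ^ (k - 1)) L in (L', c + c')) (Ms' @ Od @ Ls, c + length Y div 2) [Suc k0..<Suc k0+j])
     = (c + length Y div 2) + (\<Sum>i<j. length ((step^^i) (step Y)) div 2)"
    using Suc.IH[of "Suc k0" Ms' "step Y" "Od @ Ls" "c + length Y div 2"] l2 e ls o by simp
  have sh: "(\<Sum>i<Suc j. length ((step^^i) Y) div 2) = length Y div 2 + (\<Sum>i<j. length ((step^^i) (step Y)) div 2)"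
    by (subst sum.lessThan_Suc_shift) (simp add: funpow_Suc_right del: funpow.simps)
  show ?case unfolding up using ph IH sh by simp
qed

lemma C_OP_eq: "C_OP X = (\<Sum>i<nat \<lfloor>log 2 (real (length X))\<rfloor>. length ((step^^i) X) div 2)"
proof -
  let ?K = "nat \<lfloor>log 2 (real (length X))\<rfloor>"
  have l2: "list_all2 (blk X (2^(1-1))) (map (\<lambda>i. {i}) [0..<length X]) X"
    by (auto simp: list_all2_conv_all_nth blk_def)
  have o: "ordb (map (\<lambda>i. {i}) [0..<length X] @ [])"
    unfolding ordb_def by (auto simp: sorted_wrt_map sorted_wrt_iff_nth_less)
  have u: "[1..<?K + 1] = [1..<1 + ?K]" by simp
  show ?thesis
    unfolding C_OP_def op_run_def u
    using run_main[of 1 X _ X "[]" 0 ?K] l2 o by simp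
qed

fun Rc :: "bool list \<Rightarrow> nat" where
  "Rc (x # y # Y) = (if x = y then Rc Y else Suc (Rc Y))"
| "Rc _ = 0"

definition mm :: "bool list \<Rightarrow> nat" where
  "mm Y = min (count_list Y True) (count_list Y False)"

lemma step_len: "length (step Y) + Rc Y = length Y div 2"
  by (induction Y rule: step.induct) auto

lemma ones_step: "2 * count_list (step Y) b + Rc Y \<le> count_list Y b \<and> count_list Y b \<le> 2 * count_list (step Y) b + Rc Y + 1"
  by (induction Y rule: step.induct) auto

lemma count_tf: "count_list Y True + count_list Y False = length Y"
  by (induction Y) auto

lemma mm_step: "2 * mm (step Y) + Rc Y + 1 \<ge> mm Y"
  using ones_step[of Y True] ones_step[of Y False] unfolding mm_def by linarith

lemma D1: "(\<Sum>k<K. length ((step^^k) Y) div 2) + (\<Sum>k<K. Rc ((step^^k) Y)) + length ((step^^K) Y) \<le> length Y"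
proof (induction K arbitrary: Y)
  case 0
  then show ?case by simp
next
  case (Suc K)
  have s1: "(\<Sum>k<Suc K. length ((step^^k) Y) div 2) = length Y div 2 + (\<Sum>k<K. length ((step^^k) (step Y)) div 2)"
    by (subst sum.lessThan_Suc_shift) (simp add: funpow_Suc_right del: funpow.simps)
  have s2: "(\<Sum>k<Suc K. Rc ((step^^k) Y)) = Rc Y + (\<Sum>k<K. Rc ((step^^k) (step Y)))"
    by (subst sum.lessThan_Suc_shift) (simp add: funpow_Suc_right del: funpow.simps)
  have s3: "(step^^Suc K) Y = (step^^K) (step Y)" by (simp add: funpow_Suc_right del: funpow.simps)
  show ?case using Suc.IH[of "step Y"] step_len[of Y] unfolding s1 s2 s3 by linarith
qed

lemma D2:
  assumes "\<forall>k<K. real (Rc ((step^^k) Y)) \<ge> real (mm ((step^^k) Y)) / 2 - \<delta> ((step^^k) Y)"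
  shows "real (\<Sum>k<K. Rc ((step^^k) Y)) \<ge> 2/3 * real (mm Y) - (\<Sum>k<K. (2 * \<delta> ((step^^k) Y) + 1) / 3) - 2/3 * real (mm ((step^^K) Y))"
  using assms
proof (induction K arbitrary: Y)
  case 0
  then show ?case by simp
next
  case (Suc K)
  have s2: "(\<Sum>k<Suc K. Rc ((step^^k) Y)) = Rc Y + (\<Sum>k<K. Rc ((step^^k) (step Y)))"
    by (subst sum.lessThan_Suc_shift) (simp add: funpow_Suc_right del: funpow.simps)
  have s4: "(\<Sum>k<Suc K. (2 * \<delta> ((step^^k) Y) + 1) / 3) = (2 * \<delta> Y + 1) / 3 + (\<Sum>k<K. (2 * \<delta> ((step^^k) (step Y)) + 1) / 3)"
    by (subst sum.lessThan_Suc_shift) (simp add: funpow_Suc_right del: funpow.simps)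
  have s3: "(step^^Suc K) Y = (step^^K) (step Y)" by (simp add: funpow_Suc_right del: funpow.simps)
  have pre: "\<forall>k<K. real (Rc ((step^^k) (step Y))) \<ge> real (mm ((step^^k) (step Y))) / 2 - \<delta> ((step^^k) (step Y))"
  proof (intro allI impI)
    fix k assume "k < K"
    then have "Suc k < Suc K" by simp
    then show "real (Rc ((step^^k) (step Y))) \<ge> real (mm ((step^^k) (step Y))) / 2 - \<delta> ((step^^k) (step Y))"
      using Suc.prems by (metis funpow_Suc_right o_apply)
  qed
  have h0: "real (Rc Y) \<ge> real (mm Y) / 2 - \<delta> Y" using Suc.prems[rule_format, of 0] by simp
  have h1: "real (mm Y) \<le> 2 * real (mm (step Y)) + real (Rc Y) + 1" using mm_step[of Y] by linarith
  show ?case using Suc.IH[OF pre] h0 h1 unfolding s2 s3 s4 of_nat_add by argo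
qed

lemma len_funpow: "real (length ((step^^k) Y)) \<le> real (length Y) / 2^k"
proof (induction k)
  case 0
  then show ?case by simp
next
  case (Suc k)
  have "real (length (step ((step^^k) Y))) \<le> real (length ((step^^k) Y)) / 2"
    using step_len[of "(step^^k) Y"] by linarith
  then have "real (length (step ((step^^k) Y))) \<le> real (length Y) / 2^k / 2"
    using Suc by (smt (verit, ccfv_SIG) divide_right_mono)
  then show ?case by (simp add: field_simps)
qed

definition G :: "nat \<Rightarrow> nat \<Rightarrow> nat \<Rightarrow> nat \<Rightarrow> nat" where
  "G n a l q = (if l \<le> n div 2 \<and> 2*q + n div 2 \<le> a + l \<and> a + l \<le> 2*q + n div 2 + n mod 2
     then (n div 2 choose l) * 2^(n div 2 - l) else 0)"

lemma G_rec0: "G (Suc (Suc m)) a 0 0 = (if a \<ge> 1 then 2 * G m (a-1) 0 0 else 0)"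
  unfolding G_def by auto

lemma G_recT: "G (Suc (Suc m)) a (Suc l) (Suc q) = (if a \<ge> 2 then G m (a-2) l q else 0) + (if a \<ge> 1 then 2 * G m (a-1) (Suc l) (Suc q) else 0)"
proof -
  define p where "p = m div 2"
  define e where "e = m mod 2"
  have d: "Suc (Suc m) div 2 = Suc p" "Suc (Suc m) mod 2 = e" unfolding p_def e_def by auto
  have e1: "e \<le> 1" unfolding e_def by auto
  define c where "c = (l \<le> p \<and> 2*q + p + 2 \<le> a + l \<and> a + l \<le> 2*q + p + 2 + e)"
  have L: "G (Suc (Suc m)) a (Suc l) (Suc q) = (if c then (Suc p choose Suc l) * 2^(p - l) else 0)"
    unfolding G_def d c_def p_def[symmetric] e_def[symmetric] by simp
  have R1: "(if a \<ge> 2 then G m (a-2) l q else 0) = (if c then (p choose l) * 2^(p - l) else 0)"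
    unfolding G_def c_def p_def[symmetric] e_def[symmetric] by auto
  have R2: "(if a \<ge> 1 then 2 * G m (a-1) (Suc l) (Suc q) else 0) = (if c then (p choose Suc l) * 2^(p - l) else 0)"
  proof (cases "l < p")
    case True
    then have pw: "(2::nat)^(p - l) = 2 * 2^(p - Suc l)" by (metis Suc_diff_Suc power_Suc)
    show ?thesis unfolding G_def c_def p_def[symmetric] e_def[symmetric] using True by (simp add: pw)
  next
    case False
    then show ?thesis unfolding G_def c_def p_def[symmetric] e_def[symmetric] by auto
  qed
  show ?thesis unfolding L R1 R2 by (auto simp: algebra_simps)
qed

lemma G_recF: "G (Suc (Suc m)) a (Suc l) q = G m a l q + (if a \<ge> 1 then 2 * G m (a-1) (Suc l) q else 0)"
proof -
  define p where "p = m div 2"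
  define e where "e = m mod 2"
  have d: "Suc (Suc m) div 2 = Suc p" "Suc (Suc m) mod 2 = e" unfolding p_def e_def by auto
  have e1: "e \<le> 1" unfolding e_def by auto
  define c where "c = (l \<le> p \<and> 2*q + p \<le> a + l \<and> a + l \<le> 2*q + p + e)"
  have L: "G (Suc (Suc m)) a (Suc l) q = (if c then (Suc p choose Suc l) * 2^(p - l) else 0)"
    unfolding G_def d c_def p_def[symmetric] e_def[symmetric] by simp
  have R1: "G m a l q = (if c then (p choose l) * 2^(p - l) else 0)"
    unfolding G_def c_def p_def[symmetric] e_def[symmetric] by auto
  have R2: "(if a \<ge> 1 then 2 * G m (a-1) (Suc l) q else 0) = (if c then (p choose Suc l) * 2^(p - l) else 0)"
  proof (cases "l < p")
    case True
    then have pw: "(2::nat)^(p - l) = 2 * 2^(p - Suc l)" by (metis Suc_diff_Suc power_Suc)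
    show ?thesis unfolding G_def c_def p_def[symmetric] e_def[symmetric] using True by (simp add: pw)
  next
    case False
    then show ?thesis unfolding G_def c_def p_def[symmetric] e_def[symmetric] by auto
  qed
  show ?thesis unfolding L R1 R2 by (auto simp: algebra_simps)
qed

lemma finite_len: "finite {Y::bool list. length Y = n \<and> Q Y}"
proof -
  have "finite {xs::bool list. set xs \<subseteq> UNIV \<and> length xs = n}"
    by (rule finite_lists_length_eq) simp
  then show ?thesis by (rule finite_subset[rotated]) auto
qed

lemma len0: "card {Y::bool list. length Y = 0 \<and> Q Y} = (if Q [] then 1 else 0)"
proof -
  have "{Y::bool list. length Y = 0 \<and> Q Y} = (if Q [] then {[]} else {})" by auto
  then show ?thesis by simp
qed

lemma card_two_images:
  assumes "finite A" "finite B" "inj f" "inj g" "\<And>x y. f x \<noteq> g y"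
  shows "card (f ` A \<union> g ` B) = card A + card B"
proof -
  have "card (f ` A \<union> g ` B) = card (f ` A) + card (g ` B)"
    by (rule card_Un_disjoint) (use assms in auto)
  also have "\<dots> = card A + card B"
    using assms by (simp add: card_image inj_on_subset)
  finally show ?thesis .
qed

lemma split_first: "card {Y::bool list. length Y = Suc m \<and> Q Y}
   = card {Y. length Y = m \<and> Q (True # Y)} + card {Y. length Y = m \<and> Q (False # Y)}"
proof -
  have e: "{Y::bool list. length Y = Suc m \<and> Q Y} = Cons True ` {Y. length Y = m \<and> Q (True # Y)} \<union> Cons False ` {Y. length Y = m \<and> Q (False # Y)}"
  proof (rule set_eqI, rule iffI)
    fix Y assume "Y \<in> {Y::bool list. length Y = Suc m \<and> Q Y}"
    then have h: "length Y = Suc m" "Q Y" by auto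
    then obtain Y' x where "Y = x # Y'" by (cases Y) auto
    with h have "Y = x # Y'" "length Y' = m" "Q Y" by auto
    then show "Y \<in> Cons True ` {Y. length Y = m \<and> Q (True # Y)} \<union> Cons False ` {Y. length Y = m \<and> Q (False # Y)}"
      by (cases x) auto
  next
    fix Y assume "Y \<in> Cons True ` {Y. length Y = m \<and> Q (True # Y)} \<union> Cons False ` {Y. length Y = m \<and> Q (False # Y)}"
    then show "Y \<in> {Y::bool list. length Y = Suc m \<and> Q Y}" by auto
  qed
  show ?thesis unfolding e
    by (rule card_two_images) (auto simp: finite_len)
qed

lemma split_last: "card {Y::bool list. length Y = Suc m \<and> Q Y}
   = card {Y. length Y = m \<and> Q (Y @ [True])} + card {Y. length Y = m \<and> Q (Y @ [False])}"
proof -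
  have e: "{Y::bool list. length Y = Suc m \<and> Q Y} = (\<lambda>Y. Y @ [True]) ` {Y. length Y = m \<and> Q (Y @ [True])} \<union> (\<lambda>Y. Y @ [False]) ` {Y. length Y = m \<and> Q (Y @ [False])}"
  proof (rule set_eqI, rule iffI)
    fix Y assume "Y \<in> {Y::bool list. length Y = Suc m \<and> Q Y}"
    then have h: "length Y = Suc m" "Q Y" by auto
    then obtain Y' x where "Y = Y' @ [x]" by (cases Y rule: rev_exhaust) auto
    with h have "Y = Y' @ [x]" "length Y' = m" "Q Y" by auto
    then show "Y \<in> (\<lambda>Y. Y @ [True]) ` {Y. length Y = m \<and> Q (Y @ [True])} \<union> (\<lambda>Y. Y @ [False]) ` {Y. length Y = m \<and> Q (Y @ [False])}"
      by (cases x) auto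
  next
    fix Y assume "Y \<in> (\<lambda>Y. Y @ [True]) ` {Y. length Y = m \<and> Q (Y @ [True])} \<union> (\<lambda>Y. Y @ [False]) ` {Y. length Y = m \<and> Q (Y @ [False])}"
    then show "Y \<in> {Y::bool list. length Y = Suc m \<and> Q Y}" by auto
  qed
  show ?thesis unfolding e
    by (rule card_two_images) (auto simp: finite_len inj_def)
qed

definition fiber :: "nat \<Rightarrow> nat \<Rightarrow> bool list \<Rightarrow> nat" where
  "fiber n a Z = card {Y. length Y = n \<and> count_list Y True = a \<and> step Y = Z}"


lemma fibTT: "card {Y. length Y = m \<and> Suc (Suc (count_list Y True)) = a \<and> True # step Y = Z}
  = (if 2 \<le> a \<and> Z \<noteq> [] \<and> hd Z then fiber m (a-2) (tl Z) else 0)"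
proof (cases "2 \<le> a \<and> Z \<noteq> [] \<and> hd Z")
  case True
  then obtain Z' where z: "Z = True # Z'" by (cases Z) auto
  from True obtain a' where "a = Suc (Suc a')" by (cases a; cases "a - 1") auto
  note this z
  then show ?thesis unfolding fiber_def by simp
next
  case False
  have e: "{Y. length Y = m \<and> Suc (Suc (count_list Y True)) = a \<and> True # step Y = Z} = {}" using False by auto
  show ?thesis unfolding e if_not_P[OF False] by simp
qed

lemma fibFF: "card {Y. length Y = m \<and> count_list Y True = a \<and> False # step Y = Z}
  = (if Z \<noteq> [] \<and> \<not> hd Z then fiber m a (tl Z) else 0)"
proof (cases "Z \<noteq> [] \<and> \<not> hd Z")
  case True
  then obtain Z' where "Z = False # Z'" by (cases Z) auto
  then show ?thesis unfolding fiber_def by simp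
next
  case False
  have e: "{Y. length Y = m \<and> count_list Y True = a \<and> False # step Y = Z} = {}" using False by auto
  show ?thesis unfolding e if_not_P[OF False] by simp
qed

lemma fibTF: "card {Y. length Y = m \<and> Suc (count_list Y True) = a \<and> step Y = Z}
  = (if 1 \<le> a then fiber m (a-1) Z else 0)"
proof (cases "1 \<le> a")
  case True
  then obtain a' where "a = Suc a'" by (cases a) auto
  then show ?thesis unfolding fiber_def by simp
next
  case False
  then have e: "{Y. length Y = m \<and> Suc (count_list Y True) = a \<and> step Y = Z} = {}" by auto
  show ?thesis unfolding e if_not_P[OF False] by simp
qed

lemma fiber_G: "fiber n a Z = G n a (length Z) (count_list Z True)"
proof (induction n arbitrary: a Z rule: less_induct)
  case (less n)
  consider "n = 0" | "n = Suc 0" | m where "n = Suc (Suc m)" by (cases n; cases "n - 1") auto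
  then show ?case
  proof cases
    case 1
    have "fiber n a Z = (if a = 0 \<and> Z = [] then 1 else 0)"
      unfolding fiber_def 1 by (subst len0) auto
    then show ?thesis unfolding 1 G_def by (cases Z) auto
  next
    case 2
    have "fiber n a Z = (if a = 1 \<and> Z = [] then 1 else 0) + (if a = 0 \<and> Z = [] then 1 else 0)"
      unfolding fiber_def 2 split_first len0 by auto
    then show ?thesis unfolding 2 G_def by (cases Z) auto
  next
    case 3
    have "fiber n a Z = card {Y. length Y = m \<and> Suc (Suc (count_list Y True)) = a \<and> True # step Y = Z}
       + card {Y. length Y = m \<and> Suc (count_list Y True) = a \<and> step Y = Z}
       + (card {Y. length Y = m \<and> Suc (count_list Y True) = a \<and> step Y = Z}
       + card {Y. length Y = m \<and> count_list Y True = a \<and> False # step Y = Z})"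
      unfolding fiber_def 3 by (simp add: split_first)
    also have "\<dots> = (if 2 \<le> a \<and> Z \<noteq> [] \<and> hd Z then fiber m (a-2) (tl Z) else 0)
       + 2 * (if 1 \<le> a then fiber m (a-1) Z else 0)
       + (if Z \<noteq> [] \<and> \<not> hd Z then fiber m a (tl Z) else 0)"
      unfolding fibTT fibFF fibTF by simp
    finally have f: "fiber n a Z = \<dots>" .
    have lt: "m < n" using 3 by simp
    show ?thesis
    proof (cases Z)
      case Nil
      have i2: "fiber m (a-1) Z = G m (a-1) 0 0"
        using less.IH[OF lt, of "a-1" Z] Nil by simp
      have g: "G n a (length Z) (count_list Z True) = G (Suc (Suc m)) a 0 0"
        using Nil 3 by simp
      show ?thesis unfolding f g G_rec0 using Nil i2 by simp
    next
      case (Cons z Z')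
      show ?thesis
      proof (cases z)
        case True
        have i1: "fiber m (a-2) Z' = G m (a-2) (length Z') (count_list Z' True)" using less.IH[OF lt] .
        have i2: "fiber m (a-1) Z = G m (a-1) (Suc (length Z')) (Suc (count_list Z' True))"
          using less.IH[OF lt, of "a-1" Z] Cons True by simp
        have g: "G n a (length Z) (count_list Z True) = G (Suc (Suc m)) a (Suc (length Z')) (Suc (count_list Z' True))"
          using Cons True 3 by simp
        show ?thesis unfolding f g G_recT using Cons True i1 i2 by simp
      next
        case False
        have i1: "fiber m a Z' = G m a (length Z') (count_list Z' True)" using less.IH[OF lt] .
        have i2: "fiber m (a-1) Z = G m (a-1) (Suc (length Z')) (count_list Z' True)"
          using less.IH[OF lt, of "a-1" Z] Cons False by simp
        have g: "G n a (length Z) (count_list Z True) = G (Suc (Suc m)) a (Suc (length Z')) (count_list Z' True)"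
          using Cons False 3 by simp
        show ?thesis unfolding f g G_recF using Cons False i1 i2 by simp
      qed
    qed
  qed
qed

lemma finite_le: "finite {Z::bool list. length Z \<le> n \<and> Q Z}"
proof -
  have "finite {xs::bool list. set xs \<subseteq> UNIV \<and> length xs \<le> n}"
    by (rule finite_lists_length_le) simp
  then show ?thesis by (rule finite_subset[rotated]) auto
qed

lemma finite_S: "finite {Y \<in> strings_with_ones n a. Q Y}"
  unfolding strings_with_ones_def using finite_len[of n "\<lambda>Y. count_list Y True = a \<and> Q Y"]
  by (simp add: conj_assoc)

lemma card_group:
  assumes "finite A" "finite I" "f ` A \<subseteq> I"
  shows "card A = (\<Sum>i\<in>I. card {x\<in>A. f x = i})"
  using sum.group[OF assms, of "\<lambda>_. 1::nat"] by simp

lemma ident: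
  "real (card {Y \<in> strings_with_ones n a. P (step Y)})
   = (\<Sum>q\<in>{..n}\<times>{..n}. real (G n a (fst q) (snd q)) * real (card {Z \<in> strings_with_ones (fst q) (snd q). P Z}))"
proof -
  define W where "W = {Z::bool list. length Z \<le> n \<and> P Z}"
  define F where "F Z = {Y. length Y = n \<and> count_list Y True = a \<and> step Y = Z}" for Z
  have slen: "length (step Y) \<le> length Y" for Y using step_len[of Y] by linarith
  have e: "{Y \<in> strings_with_ones n a. P (step Y)} = (\<Union>Z\<in>W. F Z)"
    unfolding W_def F_def strings_with_ones_def using slen by auto
  have finW: "finite W" unfolding W_def by (rule finite_le)
  have "card (\<Union>Z\<in>W. F Z) = (\<Sum>Z\<in>W. card (F Z))"
    by (rule card_UN_disjoint) (auto simp: finW F_def finite_len[of n "\<lambda>Y. count_list Y True = a \<and> step Y = _", simplified conj_assoc])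
  also have "\<dots> = (\<Sum>Z\<in>W. G n a (length Z) (count_list Z True))"
    unfolding F_def using fiber_G[unfolded fiber_def] by simp
  finally have c1: "card {Y \<in> strings_with_ones n a. P (step Y)} = (\<Sum>Z\<in>W. G n a (length Z) (count_list Z True))"
    unfolding e .
  define f where "f Z = (length Z, count_list Z True)" for Z :: "bool list"
  have fW: "f ` W \<subseteq> {..n}\<times>{..n}" unfolding f_def W_def using count_le_length
    by (auto intro: le_trans[OF count_le_length])
  have "(\<Sum>Z\<in>W. G n a (length Z) (count_list Z True)) = (\<Sum>q\<in>{..n}\<times>{..n}. \<Sum>Z\<in>{Z\<in>W. f Z = q}. G n a (length Z) (count_list Z True))"
    using sum.group[OF finW _ fW, of "\<lambda>Z. G n a (length Z) (count_list Z True)"] by simp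
  also have "\<dots> = (\<Sum>q\<in>{..n}\<times>{..n}. G n a (fst q) (snd q) * card {Z \<in> strings_with_ones (fst q) (snd q). P Z})"
  proof (rule sum.cong[OF refl])
    fix q assume q: "q \<in> {..n}\<times>{..n}"
    have se: "{Z\<in>W. f Z = q} = {Z \<in> strings_with_ones (fst q) (snd q). P Z}"
      using q unfolding W_def f_def strings_with_ones_def by (cases q) auto
    have "(\<Sum>Z\<in>{Z\<in>W. f Z = q}. G n a (length Z) (count_list Z True)) = (\<Sum>Z\<in>{Z\<in>W. f Z = q}. G n a (fst q) (snd q))"
      by (rule sum.cong) (auto simp: f_def)
    then show "(\<Sum>Z\<in>{Z\<in>W. f Z = q}. G n a (length Z) (count_list Z True)) = G n a (fst q) (snd q) * card {Z \<in> strings_with_ones (fst q) (snd q). P Z}"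
      unfolding se by simp
  qed
  finally show ?thesis unfolding c1 by (simp add: of_nat_sum)
qed

lemma transfer:
  assumes "\<And>l q. real (card {Z \<in> strings_with_ones l q. P Z}) \<le> \<epsilon> * real (card (strings_with_ones l q))"
  shows "real (card {Y \<in> strings_with_ones n a. P (step Y)}) \<le> \<epsilon> * real (card (strings_with_ones n a))"
proof -
  have "real (card {Y \<in> strings_with_ones n a. P (step Y)})
     \<le> (\<Sum>q\<in>{..n}\<times>{..n}. real (G n a (fst q) (snd q)) * (\<epsilon> * real (card {Z \<in> strings_with_ones (fst q) (snd q). True})))"
    unfolding ident by (rule sum_mono) (auto intro: mult_left_mono assms)
  also have "\<dots> = \<epsilon> * real (card {Y \<in> strings_with_ones n a. True})"
    unfolding ident[of n a "\<lambda>_. True"] by (simp add: sum_distrib_left algebra_simps)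
  finally show ?thesis by simp
qed

definition Tc :: "nat \<Rightarrow> nat \<Rightarrow> nat \<Rightarrow> nat" where
  "Tc p q R = (p choose q) * ((p - q) choose R) * 2^R"

lemma Tc_rec: "Tc (Suc p) q R = (if q \<ge> 1 then Tc p (q-1) R else 0) + Tc p q R + (if R \<ge> 1 then 2 * Tc p q (R-1) else 0)"
proof (cases q)
  case 0
  then show ?thesis
  proof (cases R)
    case 0
    then show ?thesis using \<open>q = 0\<close> by (simp add: Tc_def)
  next
    case (Suc R')
    then show ?thesis using \<open>q = 0\<close> by (simp add: Tc_def algebra_simps)
  qed
next
  case (Suc q')
  show ?thesis
  proof (cases R)
    case 0
    then show ?thesis using Suc by (simp add: Tc_def)
  next
    case (Suc R')
    show ?thesis
    proof (cases "q \<le> p")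
      case True
      have m: "p - q' = Suc (p - q)" using True \<open>q = Suc q'\<close> by simp
      have "Tc (Suc p) q R = ((p choose q') + (p choose q)) * ((p - q') choose R) * 2^R"
        unfolding Tc_def using \<open>q = Suc q'\<close> by simp
      also have "\<dots> = (p choose q') * ((p - q') choose R) * 2^R + (p choose q) * (((p - q) choose R') + ((p - q) choose R)) * 2^R"
        unfolding m using \<open>R = Suc R'\<close> by (simp add: algebra_simps)
      also have "\<dots> = Tc p q' R + Tc p q R + 2 * Tc p q R'"
        unfolding Tc_def using \<open>R = Suc R'\<close> by (simp add: algebra_simps)
      finally show ?thesis using \<open>q = Suc q'\<close> \<open>R = Suc R'\<close> by simp
    next
      case False
      then have "p - q' = 0" "p choose q = 0" using \<open>q = Suc q'\<close> by auto
      then show ?thesis unfolding Tc_def using \<open>q = Suc q'\<close> \<open>R = Suc R'\<close> False by simp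
    qed
  qed
qed

lemma Tc_ratio: "4 * (q+1) * (p - q - 1 - R) * Tc p (q+1) R = (R+2) * (R+1) * Tc p q (R+2)"
proof (cases "q < p")
  case False
  then show ?thesis unfolding Tc_def by simp
next
  case True
  define m' where "m' = p - q - 1"
  have m: "p - q = Suc m'" using True unfolding m'_def by simp
  have a1: "(q+1) * (p choose (q+1)) = (p - q) * (p choose q)"
    using binomial_absorption[of q p] binomial_absorb_comp[of p q] by simp
  have a2: "(m' - R) * (m' choose R) = m' * ((m' - 1) choose R)" by (rule binomial_absorb_comp)
  have a3: "(R+2) * (Suc m' choose (R+2)) = Suc m' * (m' choose (R+1))"
    using binomial_absorption[of "R+1" "Suc m'"] by simp
  have a4: "(R+1) * (m' choose (R+1)) = m' * ((m' - 1) choose R)"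
    using binomial_absorption[of R m'] by simp
  have "4 * (q+1) * (p - q - 1 - R) * Tc p (q+1) R = 4 * (q+1) * (m' - R) * ((p choose (q+1)) * (m' choose R) * 2^R)"
    unfolding Tc_def m'_def by simp
  also have "\<dots> = 4 * ((q+1) * (p choose (q+1))) * ((m' - R) * (m' choose R)) * 2^R"
    by (simp only: mult_ac)
  also have "\<dots> = 4 * ((p - q) * (p choose q)) * (m' * ((m' - 1) choose R)) * 2^R" unfolding a1 a2 ..
  also have "\<dots> = (p choose q) * (Suc m' * ((R+1) * (m' choose (R+1)))) * 2^(R+2)"
    unfolding a4 m by (simp add: power_add algebra_simps)
  also have "\<dots> = (p choose q) * ((R+1) * ((R+2) * (Suc m' choose (R+2)))) * 2^(R+2)"
    unfolding a3 by (simp only: mult_ac)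
  also have "\<dots> = (R+2) * (R+1) * Tc p q (R+2)"
    unfolding Tc_def m by (simp add: algebra_simps)
  finally show ?thesis .
qed

lemma Tn_eq: "card {Y. length Y = 2*p \<and> count_list Y True = a \<and> count_list (step Y) True = q}
  = (if 2*q \<le> a then Tc p q (a - 2*q) else 0)"
proof (induction p arbitrary: a q)
  case 0
  have "card {Y::bool list. length Y = 0 \<and> count_list Y True = a \<and> count_list (step Y) True = q} = (if a = 0 \<and> q = 0 then 1 else 0)"
    by (subst len0) auto
  then show ?case by (auto simp: Tc_def)
next
  case (Suc p)
  have l: "2 * Suc p = Suc (Suc (2*p))" by simp
  have TT: "card {Y. length Y = 2*p \<and> Suc (Suc (count_list Y True)) = a \<and> Suc (count_list (step Y) True) = q}
    = (if 2 \<le> a \<and> 1 \<le> q then (if 2*(q-1) \<le> a-2 then Tc p (q-1) (a-2-2*(q-1)) else 0) else 0)"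
  proof (cases "2 \<le> a \<and> 1 \<le> q")
    case True
    then obtain a' q' where "a = Suc (Suc a')" "q = Suc q'" by (cases a; cases "a - 1"; cases q) auto
    then show ?thesis using Suc.IH[of a' q'] by simp
  next
    case False
    then have e: "{Y. length Y = 2*p \<and> Suc (Suc (count_list Y True)) = a \<and> Suc (count_list (step Y) True) = q} = {}" by auto
    show ?thesis unfolding e if_not_P[OF False] by simp
  qed
  have TF: "card {Y. length Y = 2*p \<and> Suc (count_list Y True) = a \<and> count_list (step Y) True = q}
    = (if 1 \<le> a then (if 2*q \<le> a-1 then Tc p q (a-1-2*q) else 0) else 0)"
  proof (cases "1 \<le> a")
    case True
    then obtain a' where "a = Suc a'" by (cases a) auto
    then show ?thesis using Suc.IH[of a' q] by simp
  next
    case False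
    then have e: "{Y. length Y = 2*p \<and> Suc (count_list Y True) = a \<and> count_list (step Y) True = q} = {}" by auto
    show ?thesis unfolding e if_not_P[OF False] by simp
  qed
  have "card {Y. length Y = 2 * Suc p \<and> count_list Y True = a \<and> count_list (step Y) True = q}
     = card {Y. length Y = 2*p \<and> Suc (Suc (count_list Y True)) = a \<and> Suc (count_list (step Y) True) = q}
     + card {Y. length Y = 2*p \<and> Suc (count_list Y True) = a \<and> count_list (step Y) True = q}
     + (card {Y. length Y = 2*p \<and> Suc (count_list Y True) = a \<and> count_list (step Y) True = q}
     + card {Y. length Y = 2*p \<and> count_list Y True = a \<and> count_list (step Y) True = q})"
    unfolding l by (simp add: split_first)
  also have "\<dots> = (if 2 \<le> a \<and> 1 \<le> q then (if 2*(q-1) \<le> a-2 then Tc p (q-1) (a-2-2*(q-1)) else 0) else 0)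
     + 2 * (if 1 \<le> a then (if 2*q \<le> a-1 then Tc p q (a-1-2*q) else 0) else 0)
     + (if 2*q \<le> a then Tc p q (a - 2*q) else 0)"
    unfolding TT TF Suc.IH by simp
  also have "\<dots> = (if 2*q \<le> a then Tc (Suc p) q (a - 2*q) else 0)"
  proof (cases "2*q \<le> a")
    case True
    have r1: "(if 2 \<le> a \<and> 1 \<le> q then (if 2*(q-1) \<le> a-2 then Tc p (q-1) (a-2-2*(q-1)) else 0) else 0)
       = (if q \<ge> 1 then Tc p (q-1) (a - 2*q) else 0)"
      using True by (cases q) auto
    have r2: "2 * (if 1 \<le> a then (if 2*q \<le> a-1 then Tc p q (a-1-2*q) else 0) else 0)
       = (if a - 2*q \<ge> 1 then 2 * Tc p q (a - 2*q - 1) else 0)"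
      using True by auto
    show ?thesis unfolding r1 r2 Tc_rec[of p q "a - 2*q"] using True by simp
  next
    case False
    then show ?thesis by auto
  qed
  finally show ?case .
qed

definition TT :: "nat \<Rightarrow> nat \<Rightarrow> nat \<Rightarrow> nat" where
  "TT p a q = (if 2*q \<le> a then Tc p q (a - 2*q) else 0)"

lemma T_step:
  fixes u :: real
  assumes ap: "a \<le> p" and a0: "0 < a" and u0: "0 \<le> u" and ua: "4*u \<le> real a" and qa: "real a/4 + u \<le> real q"
  shows "real (TT p a (q+1)) \<le> (1 - 4*u/real a) * real (TT p a q)"
proof -
  have rho0: "0 \<le> 1 - 4*u/real a" using ua a0 by (simp add: field_simps)
  show ?thesis
  proof (cases "2*(q+1) \<le> a")
    case False
    then have "TT p a (q+1) = 0" unfolding TT_def by simp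
    then show ?thesis using rho0 by simp
  next
    case True
    define R where "R = a - 2*(q+1)"
    have aR: "a = 2*q + 2 + R" using True unfolding R_def by simp
    have t1: "TT p a (q+1) = Tc p (q+1) R" unfolding TT_def R_def using True by simp
    have t0: "TT p a q = Tc p q (R+2)" unfolding TT_def using aR by simp
    have id: "4 * (q+1) * (p - q - 1 - R) * Tc p (q+1) R = (R+2) * (R+1) * Tc p q (R+2)" by (rule Tc_ratio)
    have pq: "p - q - 1 - R \<ge> q + 1" using ap aR by simp
    define x where "x = real R + 2"
    define y where "y = 2 * real q + 2"
    define \<rho> where "\<rho> = 1 - 4*u/real a"
    have aR': "real a = 2*real q + 2 + real R" using aR by simp
    have x1: "x \<le> real a/2 - 2*u" using qa aR' unfolding x_def by linarith
    have y1: "y \<ge> real a/2 + 2*u" using qa unfolding y_def by simp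
    have xy: "x \<le> y" using x1 y1 u0 by simp
    have x0: "0 \<le> x" unfolding x_def by simp
    have "\<rho> * (real a/2 + 2*u) = real a/2 - 8*u^2/real a" unfolding \<rho>_def using a0
      by (simp add: field_simps power2_eq_square)
    also have "\<dots> \<ge> real a/2 - 2*u"
    proof -
      have "u * (u * 4) \<le> u * real a" using ua u0 by (simp add: mult_left_mono mult.commute)
      then have "8*u^2/real a \<le> 2*u" using a0 by (simp add: field_simps power2_eq_square)
      then show ?thesis by simp
    qed
    finally have "\<rho> * (real a/2 + 2*u) \<ge> real a/2 - 2*u" .
    moreover have "\<rho> * (real a/2 + 2*u) \<le> \<rho> * y" using y1 rho0 unfolding \<rho>_def by (simp add: mult_left_mono)
    ultimately have xry: "x \<le> \<rho> * y" using x1 by simp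
    have "x * x \<le> (\<rho> * y) * y" using xry xy x0 by (meson mult_mono order_trans rho0 \<rho>_def mult_nonneg_nonneg order.trans x0) 
    then have xx: "x^2 \<le> \<rho> * y^2" by (simp add: power2_eq_square mult_ac)
    have Tge: "0 \<le> real (Tc p q (R+2))" by simp
    have "y^2 * real (Tc p (q+1) R) \<le> real (4 * (q+1) * (p - q - 1 - R)) * real (Tc p (q+1) R)"
    proof (rule mult_right_mono)
      have "y^2 = real (4 * (q+1) * (q+1))" unfolding y_def by (simp add: power2_eq_square algebra_simps)
      also have "\<dots> \<le> real (4 * (q+1) * (p - q - 1 - R))"
        unfolding of_nat_le_iff using pq by (intro mult_left_mono) auto
      finally show "y^2 \<le> real (4 * (q+1) * (p - q - 1 - R))" .
    qed simp
    also have "\<dots> = real ((R+2) * (R+1)) * real (Tc p q (R+2))" using id by (metis of_nat_mult)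
    also have "\<dots> \<le> x^2 * real (Tc p q (R+2))"
      by (rule mult_right_mono) (auto simp: x_def power2_eq_square algebra_simps)
    also have "\<dots> \<le> \<rho> * y^2 * real (Tc p q (R+2))" using xx Tge by (simp add: mult_right_mono)
    finally have "y^2 * real (Tc p (q+1) R) \<le> y^2 * (\<rho> * real (Tc p q (R+2)))" by (simp add: mult_ac)
    moreover have "y^2 > 0" unfolding y_def by (simp add: add_pos_nonneg)
    ultimately have "real (Tc p (q+1) R) \<le> \<rho> * real (Tc p q (R+2))" by simp
    then show ?thesis unfolding t1 t0 \<rho>_def .
  qed
qed

lemma even_count: "even (length Y) \<Longrightarrow> count_list Y b = 2 * count_list (step Y) b + Rc Y"
  by (induction Y rule: step.induct) auto

lemma card_T: "card {Y \<in> strings_with_ones (2*p) a. count_list (step Y) True = q} = TT p a q"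
proof -
  have "{Y \<in> strings_with_ones (2*p) a. count_list (step Y) True = q} = {Y. length Y = 2*p \<and> count_list Y True = a \<and> count_list (step Y) True = q}"
    unfolding strings_with_ones_def by auto
  then show ?thesis unfolding TT_def using Tn_eq by simp
qed

lemma card_range:
  assumes "\<forall>Y \<in> strings_with_ones (2*p) a. count_list (step Y) True \<le> a"
  shows "card {Y \<in> strings_with_ones (2*p) a. count_list (step Y) True \<in> {q0..a}} = (\<Sum>q\<in>{q0..a}. TT p a q)"
proof -
  let ?A = "{Y \<in> strings_with_ones (2*p) a. count_list (step Y) True \<in> {q0..a}}"
  have fA: "finite ?A" by (rule finite_S)
  have "card ?A = (\<Sum>q\<in>{q0..a}. card {Y\<in>?A. count_list (step Y) True = q})"
    by (rule card_group[OF fA]) auto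
  also have "\<dots> = (\<Sum>q\<in>{q0..a}. TT p a q)"
  proof (rule sum.cong[OF refl])
    fix q assume q: "q \<in> {q0..a}"
    have "{Y\<in>?A. count_list (step Y) True = q} = {Y \<in> strings_with_ones (2*p) a. count_list (step Y) True = q}"
      using q by auto
    then show "card {Y\<in>?A. count_list (step Y) True = q} = TT p a q" using card_T by simp
  qed
  finally show ?thesis .
qed

lemma even_tail:
  fixes t :: real
  assumes ap: "a \<le> p" and t24: "t \<ge> 24"
  shows "real (card {Y \<in> strings_with_ones (2*p) a. real (Rc Y) < real a/2 + 1 - t})
     \<le> exp (-(t^2)/(8*real a)) * real (card (strings_with_ones (2*p) a))"
proof -
  let ?S = "strings_with_ones (2*p) a"
  let ?f = "\<lambda>Y. count_list (step Y) True"
  let ?B = "{Y \<in> ?S. real (Rc Y) < real a/2 + 1 - t}"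
  have cnt: "count_list Y True = 2 * ?f Y + Rc Y" if "Y \<in> ?S" for Y
    using that even_count[of Y True] unfolding strings_with_ones_def by auto
  have fa: "\<forall>Y \<in> ?S. ?f Y \<le> a"
    using cnt unfolding strings_with_ones_def by fastforce
  have finS: "finite ?S" using finite_S[of "2*p" a "\<lambda>_. True"] by simp
  show ?thesis
  proof (cases "t \<ge> real a/2 + 1")
    case True
    have e: "?B = {}" using True by auto
    show ?thesis unfolding e by simp
  next
    case False
    then have ta: "t \<le> real a" and a0: "a > 0" using t24 by linarith+
    define u where "u = t/4"
    define \<rho> where "\<rho> = 1 - 4*u/real a"
    have rho0: "0 \<le> \<rho>" unfolding \<rho>_def u_def using ta a0 by (simp add: field_simps)
    define H where "H q0 = (\<Sum>q\<in>{q0..a}. real (TT p a q))" for q0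
    have H0: "\<And>q0. 0 \<le> H q0" unfolding H_def by (simp add: sum_nonneg)
    define q1 where "q1 = nat \<lceil>real a/4 + u\<rceil>"
    have q1r: "real q1 \<ge> real a/4 + u" unfolding q1_def by linarith
    have q1u: "real q1 < real a/4 + u + 1" unfolding q1_def u_def using t24 by linarith
    have Hstep: "H (Suc q) \<le> \<rho> * H q" if qq: "q \<ge> q1" for q
    proof (cases "Suc q \<le> a")
      case False
      then have "H (Suc q) = 0" unfolding H_def by simp
      then show ?thesis using rho0 H0 by simp
    next
      case True
      then obtain a1 where a1: "a = Suc a1" by (cases a) auto
      have "H (Suc q) = (\<Sum>i\<in>{q..a1}. real (TT p a (Suc i)))"
        unfolding H_def a1 by (rule sum.shift_bounds_cl_Suc_ivl)
      also have "\<dots> \<le> (\<Sum>i\<in>{q..a1}. \<rho> * real (TT p a i))"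
      proof (rule sum_mono)
        fix i assume "i \<in> {q..a1}"
        then have "real i \<ge> real a/4 + u" using q1r qq by auto
        then show "real (TT p a (Suc i)) \<le> \<rho> * real (TT p a i)"
          using T_step[of a p u i] ap a0 ta t24 unfolding \<rho>_def u_def by simp
      qed
      also have "\<dots> = \<rho> * (\<Sum>i\<in>{q..a1}. real (TT p a i))" by (simp add: sum_distrib_left)
      also have "\<dots> \<le> \<rho> * H q"
        unfolding H_def using rho0 by (intro mult_left_mono sum_mono2) (auto simp: a1)
      finally show ?thesis .
    qed
    have Hit: "H (q1 + k) \<le> \<rho>^k * H q1" for k
    proof (induction k)
      case 0
      then show ?case by simp
    next
      case (Suc k)
      have "H (q1 + Suc k) = H (Suc (q1 + k))" by simp
      also have "\<dots> \<le> \<rho> * H (q1 + k)" by (rule Hstep) simp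
      also have "\<dots> \<le> \<rho> * (\<rho>^k * H q1)" using Suc rho0 by (simp add: mult_left_mono)
      finally show ?case by simp
    qed
    have Hq1: "H q1 \<le> H 0" unfolding H_def by (intro sum_mono2) auto
    have HS: "H 0 = real (card ?S)"
    proof -
      have "{Y \<in> ?S. ?f Y \<in> {0..a}} = ?S" using fa by auto
      then have "card ?S = (\<Sum>q\<in>{0..a}. TT p a q)" using card_range[OF fa, of 0] by simp
      then show ?thesis unfolding H_def by simp
    qed
    define L where "L = nat \<lfloor>t/4 - 2\<rfloor>"
    have Lu: "real L \<le> t/4 - 2" unfolding L_def using t24 by linarith
    have Ll: "real L \<ge> t/8" unfolding L_def using t24 by linarith
    have sub: "?B \<subseteq> {Y \<in> ?S. ?f Y \<in> {q1+L..a}}"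
    proof
      fix Y assume Y: "Y \<in> ?B"
      then have YS: "Y \<in> ?S" by simp
      have c: "a = 2 * ?f Y + Rc Y" using cnt[OF YS] YS unfolding strings_with_ones_def by simp
      have "real (Rc Y) < real a/2 + 1 - t" using Y by simp
      moreover have "real a = 2 * real (?f Y) + real (Rc Y)" using c by simp
      ultimately have "real (?f Y) > real a/4 + t/2 - 1/2" by linarith
      then have "real (q1 + L) < real (?f Y)" using q1u Lu unfolding u_def by simp
      then show "Y \<in> {Y \<in> ?S. ?f Y \<in> {q1+L..a}}" using YS fa by auto
    qed
    have "real (card ?B) \<le> real (card {Y \<in> ?S. ?f Y \<in> {q1+L..a}})"
      using sub by (intro of_nat_mono card_mono) (auto intro: finite_S)
    also have "\<dots> = H (q1 + L)" unfolding H_def card_range[OF fa, of "q1+L"] by simp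
    also have "\<dots> \<le> \<rho>^L * real (card ?S)"
    proof -
      have "\<rho>^L * H q1 \<le> \<rho>^L * H 0" using Hq1 rho0 by (simp add: mult_left_mono)
      then show ?thesis using Hit[of L] HS by simp
    qed
    also have "\<dots> \<le> exp (-(t^2)/(8*real a)) * real (card ?S)"
    proof (rule mult_right_mono)
      have "\<rho> \<le> exp (-(t/real a))" unfolding \<rho>_def u_def using exp_ge_add_one_self[of "-(t/real a)"] by simp
      then have "\<rho>^L \<le> exp (-(t/real a))^L" using rho0 by (rule power_mono)
      also have "\<dots> = exp (-(t/real a) * real L)" by (simp add: exp_of_nat_mult[symmetric] mult.commute)
      also have "\<dots> \<le> exp (-(t^2)/(8*real a))"
      proof -
        have "(t/real a) * (t/8) \<le> (t/real a) * real L" using Ll t24 a0 by (intro mult_left_mono) auto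
        then have "-(t/real a) * real L \<le> -(t^2)/(8*real a)" by (simp add: power2_eq_square field_simps)
        then show ?thesis by simp
      qed
      finally show "\<rho>^L \<le> exp (-(t^2)/(8*real a))" .
    qed simp
    finally show ?thesis .
  qed
qed


lemma exp_le_2powr: fixes r x :: real shows "r \<ge> 0 \<Longrightarrow> x \<ge> 225 * r \<Longrightarrow> exp (-x) \<le> 2 powr (-r)"
proof -
  assume r: "r \<ge> 0" and x: "x \<ge> 225 * r"
  have "ln 2 \<le> (1::real)" using ln_2_less_1 by simp
  then have "r * ln (2::real) \<le> r * 1" using r by (rule mult_left_mono)
  then have "r * ln (2::real) \<le> x" using r x by linarith
  then have "exp (-x) \<le> exp (-r * ln 2)" by simp
  also have "\<dots> = 2 powr (-r)" by (simp add: powr_def)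
  finally show ?thesis .
qed

lemma even_tail2:
  fixes t r :: real
  assumes ap: "a \<le> p" and p1: "1 \<le> p" and r1: "r \<ge> 1" and tt: "t \<ge> 30 * sqrt (r * (2 * real p))"
  shows "real (card {Y \<in> strings_with_ones (2*p) a. real (Rc Y) < real a/2 + 1 - t})
     \<le> 2 powr (-r) * real (card (strings_with_ones (2*p) a))"
proof -
  have "1 * 1 \<le> r * (2 * real p)" using r1 p1 by (intro mult_mono) auto
  then have sq: "sqrt (r * (2 * real p)) \<ge> 1" by simp
  then have t30: "t \<ge> 30" using tt by linarith
  show ?thesis
  proof (cases "a = 0")
    case True
    have e: "{Y \<in> strings_with_ones (2*p) a. real (Rc Y) < real a/2 + 1 - t} = {}" using True t30 by auto
    show ?thesis unfolding e by simp
  next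
    case False
    have t2: "t^2 \<ge> 900 * (r * (2 * real p))"
    proof -
      have "(30 * sqrt (r * (2 * real p)))^2 \<le> t^2" using tt sq by (intro power_mono) auto
      then show ?thesis using r1 by (simp add: power_mult_distrib)
    qed
    have "t^2 / (8 * real a) \<ge> 225 * r"
    proof -
      have "225 * r * (8 * real a) \<le> 225 * r * (8 * real p)" using ap r1 by simp
      also have "\<dots> \<le> t^2" using t2 by simp
      finally show ?thesis using False by (simp add: field_simps)
    qed
    then have "exp (-(t^2)/(8*real a)) \<le> 2 powr (-r)" using exp_le_2powr[of r "t^2/(8*real a)"] r1 by simp
    then have "exp (-(t^2)/(8*real a)) * real (card (strings_with_ones (2*p) a)) \<le> 2 powr (-r) * real (card (strings_with_ones (2*p) a))"
      by (rule mult_right_mono) simp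
    then show ?thesis using even_tail[OF ap, of t] t30 by linarith
  qed
qed

lemma Rc_snoc: "even (length Y) \<Longrightarrow> Rc (Y @ [x]) = Rc Y"
  by (induction Y rule: Rc.induct) auto

lemma split_S_last: "card {Y \<in> strings_with_ones (Suc m) a. Q Y}
   = (if a \<ge> 1 then card {Y \<in> strings_with_ones m (a-1). Q (Y @ [True])} else 0) + card {Y \<in> strings_with_ones m a. Q (Y @ [False])}"
proof -
  have "card {Y \<in> strings_with_ones (Suc m) a. Q Y} = card {Y. length Y = Suc m \<and> (count_list Y True = a \<and> Q Y)}"
    unfolding strings_with_ones_def by (simp add: conj_assoc)
  also have "\<dots> = card {Y. length Y = m \<and> Suc (count_list Y True) = a \<and> Q (Y @ [True])} + card {Y. length Y = m \<and> count_list Y True = a \<and> Q (Y @ [False])}"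
    by (subst split_last) simp
  also have "card {Y. length Y = m \<and> Suc (count_list Y True) = a \<and> Q (Y @ [True])} = (if a \<ge> 1 then card {Y \<in> strings_with_ones m (a-1). Q (Y @ [True])} else 0)"
  proof (cases a)
    case 0
    then show ?thesis by simp
  next
    case (Suc a')
    then show ?thesis unfolding strings_with_ones_def by (simp add: conj_assoc)
  qed
  also have "card {Y. length Y = m \<and> count_list Y True = a \<and> Q (Y @ [False])} = card {Y \<in> strings_with_ones m a. Q (Y @ [False])}"
    unfolding strings_with_ones_def by (simp add: conj_assoc)
  finally show ?thesis .
qed

definition badY :: "real \<Rightarrow> bool list \<Rightarrow> bool" where
  "badY r Y \<longleftrightarrow> real (Rc Y) < real (mm Y)/2 - 30 * sqrt (r * real (length Y))"

lemma Rc_not: "Rc (map Not Y) = Rc Y"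
  by (induction Y rule: Rc.induct) auto

lemma count_not: "count_list (map Not Y) b = count_list Y (\<not> b)"
  by (induction Y) auto

lemma mm_not: "mm (map Not Y) = mm Y"
  unfolding mm_def count_not by simp

lemma badY_not: "badY r (map Not Y) = badY r Y"
  unfolding badY_def Rc_not mm_not by simp

lemma mm_le: "mm Y \<le> count_list Y True"
  unfolding mm_def by simp

lemma bad_mm0: "r \<ge> 0 \<Longrightarrow> mm Y = 0 \<Longrightarrow> \<not> badY r Y"
proof -
  assume "r \<ge> 0" "mm Y = 0"
  then have "0 \<le> sqrt (r * real (length Y))" by simp
  moreover have "0 \<le> real (Rc Y)" by simp
  ultimately show ?thesis unfolding badY_def using \<open>mm Y = 0\<close> by linarith
qed

lemma compl_card:
  assumes "a \<le> n"
  shows "card {Y \<in> strings_with_ones n a. Q Y} = card {Y \<in> strings_with_ones n (n - a). Q (map Not Y)}"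
proof -
  have cnt: "count_list Y False = length Y - count_list Y True" for Y :: "bool list"
    using count_tf[of Y] by simp
  have e: "{Y \<in> strings_with_ones n a. Q Y} = map Not ` {Y \<in> strings_with_ones n (n - a). Q (map Not Y)}"
  proof (rule set_eqI, rule iffI)
    fix Y assume Y: "Y \<in> {Y \<in> strings_with_ones n a. Q Y}"
    have "map Not Y \<in> {Y \<in> strings_with_ones n (n - a). Q (map Not Y)}"
      using Y unfolding strings_with_ones_def by (simp add: count_not cnt comp_def)
    moreover have "Y = map Not (map Not Y)" by (simp add: comp_def)
    ultimately show "Y \<in> map Not ` {Y \<in> strings_with_ones n (n - a). Q (map Not Y)}" by blast
  next
    fix Y assume "Y \<in> map Not ` {Y \<in> strings_with_ones n (n - a). Q (map Not Y)}"
    then obtain Z where Z: "Y = map Not Z" "Z \<in> strings_with_ones n (n - a)" "Q (map Not Z)" by auto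
    then show "Y \<in> {Y \<in> strings_with_ones n a. Q Y}"
      using assms unfolding strings_with_ones_def by (auto simp: count_not cnt)
  qed
  have inj: "inj (map Not)" by (rule inj_mapI) (simp add: inj_def)
  show ?thesis unfolding e by (rule card_image) (use inj in \<open>auto intro: inj_on_subset\<close>)
qed


lemma levelA_half:
  fixes r :: real
  assumes r1: "r \<ge> 1" and an: "2*a \<le> n"
  shows "real (card {Y \<in> strings_with_ones n a. badY r Y}) \<le> 2 powr (-r) * real (card (strings_with_ones n a))"
proof (cases "a = 0")
  case True
  have e: "{Y \<in> strings_with_ones n a. badY r Y} = {}"
  proof -
    have "\<not> badY r Y" if "Y \<in> strings_with_ones n a" for Y
      using that True mm_le[of Y] bad_mm0[of r Y] r1 unfolding strings_with_ones_def by simp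
    then show ?thesis by auto
  qed
  show ?thesis unfolding e by simp
next
  case False
  define p where "p = n div 2"
  have np: "n = 2*p \<or> n = Suc (2*p)" unfolding p_def by presburger
  have p1: "1 \<le> p" using np an False by auto
  then show ?thesis
  proof (cases "n = 2*p")
    case True
    define t where "t = 30 * sqrt (r * real n)"
    have sub: "{Y \<in> strings_with_ones n a. badY r Y} \<subseteq> {Y \<in> strings_with_ones (2*p) a. real (Rc Y) < real a/2 + 1 - t}"
    proof
      fix Y assume Y: "Y \<in> {Y \<in> strings_with_ones n a. badY r Y}"
      then have "real (mm Y) \<le> real a" using mm_le[of Y] unfolding strings_with_ones_def by simp
      then show "Y \<in> {Y \<in> strings_with_ones (2*p) a. real (Rc Y) < real a/2 + 1 - t}"
        using Y True unfolding badY_def t_def strings_with_ones_def by auto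
    qed
    have "real (card {Y \<in> strings_with_ones n a. badY r Y}) \<le> real (card {Y \<in> strings_with_ones (2*p) a. real (Rc Y) < real a/2 + 1 - t})"
      using sub by (intro of_nat_mono card_mono finite_S)
    also have "\<dots> \<le> 2 powr (-r) * real (card (strings_with_ones (2*p) a))"
      by (rule even_tail2) (use an True p1 r1 in \<open>auto simp: t_def\<close>)
    finally show ?thesis using True by simp
  next
    case False
    then have n1: "n = Suc (2*p)" using np by simp
    define t where "t = 30 * sqrt (r * real n)"
    have tt: "t \<ge> 30 * sqrt (r * (2 * real p))" unfolding t_def n1 using r1 by simp
    have ap: "a \<le> p" using an n1 by simp
    have cT: "card {Y \<in> strings_with_ones (2*p) (a-1). badY r (Y @ [True])}
       \<le> card {Y \<in> strings_with_ones (2*p) (a-1). real (Rc Y) < real (a-1)/2 + 1 - t}"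
    proof (intro card_mono finite_S subsetI)
      fix Y assume Y: "Y \<in> {Y \<in> strings_with_ones (2*p) (a-1). badY r (Y @ [True])}"
      then have l: "length Y = 2*p" and c: "count_list Y True = a - 1" unfolding strings_with_ones_def by auto
      have "real (mm (Y @ [True])) \<le> real (count_list Y True) + 1" using mm_le[of "Y @ [True]"] by simp
      moreover have "Rc (Y @ [True]) = Rc Y" using l by (simp add: Rc_snoc)
      ultimately show "Y \<in> {Y \<in> strings_with_ones (2*p) (a-1). real (Rc Y) < real (a-1)/2 + 1 - t}"
        using Y l c unfolding badY_def t_def n1 by auto
    qed
    have cF: "card {Y \<in> strings_with_ones (2*p) a. badY r (Y @ [False])}
       \<le> card {Y \<in> strings_with_ones (2*p) a. real (Rc Y) < real a/2 + 1 - t}"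
    proof (intro card_mono finite_S subsetI)
      fix Y assume Y: "Y \<in> {Y \<in> strings_with_ones (2*p) a. badY r (Y @ [False])}"
      then have l: "length Y = 2*p" and c: "count_list Y True = a" unfolding strings_with_ones_def by auto
      have "real (mm (Y @ [False])) \<le> real (count_list Y True)" using mm_le[of "Y @ [False]"] by simp
      moreover have "Rc (Y @ [False]) = Rc Y" using l by (simp add: Rc_snoc)
      ultimately show "Y \<in> {Y \<in> strings_with_ones (2*p) a. real (Rc Y) < real a/2 + 1 - t}"
        using Y l c unfolding badY_def t_def n1 by auto
    qed
    have eT: "real (card {Y \<in> strings_with_ones (2*p) (a-1). real (Rc Y) < real (a-1)/2 + 1 - t})
       \<le> 2 powr (-r) * real (card (strings_with_ones (2*p) (a-1)))"
      by (rule even_tail2) (use ap p1 r1 tt in auto)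
    have eF: "real (card {Y \<in> strings_with_ones (2*p) a. real (Rc Y) < real a/2 + 1 - t})
       \<le> 2 powr (-r) * real (card (strings_with_ones (2*p) a))"
      by (rule even_tail2) (use ap p1 r1 tt in auto)
    have a1: "a \<ge> 1" using \<open>a \<noteq> 0\<close> by simp
    have sb: "card {Y \<in> strings_with_ones n a. badY r Y} = card {Y \<in> strings_with_ones (2*p) (a-1). badY r (Y @ [True])} + card {Y \<in> strings_with_ones (2*p) a. badY r (Y @ [False])}"
      unfolding n1 split_S_last using a1 by simp
    have ss: "card (strings_with_ones n a) = card (strings_with_ones (2*p) (a-1)) + card (strings_with_ones (2*p) a)"
      using split_S_last[of "2*p" a "\<lambda>_. True"] a1 unfolding n1 by simp
    have "real (card {Y \<in> strings_with_ones n a. badY r Y}) \<le> 2 powr (-r) * real (card (strings_with_ones (2*p) (a-1))) + 2 powr (-r) * real (card (strings_with_ones (2*p) a))"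
    proof -
      have "real (card {Y \<in> strings_with_ones (2*p) (a-1). badY r (Y @ [True])}) \<le> real (card {Y \<in> strings_with_ones (2*p) (a-1). real (Rc Y) < real (a-1)/2 + 1 - t})"
        using cT by (rule of_nat_mono)
      moreover have "real (card {Y \<in> strings_with_ones (2*p) a. badY r (Y @ [False])}) \<le> real (card {Y \<in> strings_with_ones (2*p) a. real (Rc Y) < real a/2 + 1 - t})"
        using cF by (rule of_nat_mono)
      ultimately show ?thesis unfolding sb of_nat_add using eT eF by linarith
    qed
    also have "\<dots> = 2 powr (-r) * real (card (strings_with_ones n a))" unfolding ss by (simp add: algebra_simps)
    finally show ?thesis .
  qed
qed

lemma levelA:
  fixes r :: real
  assumes r1: "r \<ge> 1"
  shows "real (card {Y \<in> strings_with_ones n a. badY r Y}) \<le> 2 powr (-r) * real (card (strings_with_ones n a))"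
proof (cases "2*a \<le> n")
  case True
  then show ?thesis using levelA_half r1 by blast
next
  case False
  show ?thesis
  proof (cases "a \<le> n")
    case False
    have "\<forall>Y::bool list. count_list Y True \<le> length Y" by (simp add: count_le_length)
    then have "strings_with_ones n a = {}" unfolding strings_with_ones_def using False by fastforce
    then show ?thesis by simp
  next
    case True
    have b: "2*(n-a) \<le> n" using \<open>\<not> 2*a \<le> n\<close> by simp
    have c1: "card {Y \<in> strings_with_ones n a. badY r Y} = card {Y \<in> strings_with_ones n (n-a). badY r Y}"
      using compl_card[OF True, of "badY r"] by (simp add: badY_not)
    have c2: "card (strings_with_ones n a) = card (strings_with_ones n (n-a))"
      using compl_card[OF True, of "\<lambda>_. True"] by simp
    show ?thesis unfolding c1 c2 using levelA_half[OF r1 b] .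
  qed
qed

lemma levelK:
  fixes r :: real
  assumes r1: "r \<ge> 1"
  shows "real (card {Y \<in> strings_with_ones n a. badY r ((step^^k) Y)}) \<le> 2 powr (-r) * real (card (strings_with_ones n a))"
proof (induction k arbitrary: n a)
  case 0
  then show ?case using levelA[OF r1] by simp
next
  case (Suc k)
  have e: "(step^^Suc k) Y = (step^^k) (step Y)" for Y by (simp add: funpow_Suc_right del: funpow.simps)
  show ?case unfolding e by (rule transfer) (rule Suc.IH)
qed

lemma sq_bound: "(K+2)^2 \<le> 16 * (2::nat)^K"
proof (induction K)
  case 0
  then show ?case by (simp add: power2_eq_square)
next
  case (Suc K)
  show ?case
  proof (cases "K = 0")
    case True
    then show ?thesis by (simp add: power2_eq_square)
  next
    case False
    have "(Suc K + 2)^2 \<le> 2 * (K+2)^2" using False by (simp add: power2_eq_square algebra_simps)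
    also have "\<dots> \<le> 2 * (16 * 2^K)" using Suc by simp
    finally show ?thesis by simp
  qed
qed

lemma mm_short: "length Y \<le> 1 \<Longrightarrow> mm Y = 0"
  using count_tf[of Y] unfolding mm_def by linarith

lemma geo_sqrt: "(\<Sum>k<K. sqrt (1/2) ^ k) \<le> (7/2::real)"
proof -
  define q :: real where "q = sqrt (1/2)"
  have q57: "q \<le> 5/7"
  proof -
    have "sqrt (1/2) \<le> sqrt ((5/7)^2)" by (subst real_sqrt_le_iff) (simp add: power2_eq_square)
    then show ?thesis unfolding q_def by simp
  qed
  have q0: "0 \<le> q" unfolding q_def by simp
  have "(\<Sum>k<K. q ^ k) = (1 - q^K) / (1 - q)" using q57 by (subst sum_gp_strict) auto
  also have "\<dots> \<le> 1 / (1 - q)" using q57 q0 by (intro divide_right_mono) auto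
  also have "\<dots> \<le> 7/2" using q57 by (simp add: field_simps)
  finally show ?thesis unfolding q_def .
qed


lemma det_bound:
  fixes r :: real
  assumes r1: "r \<ge> 1" and N0: "length X > 0"
    and good: "\<forall>k < nat \<lfloor>log 2 (real (length X))\<rfloor>. \<not> badY r ((step^^k) X)"
  shows "real (C_OP X) < real (length X) - 2/3 * real (mm X) + 72 * sqrt (r * real (length X))"
proof -
  define N where "N = length X"
  define K where "K = nat \<lfloor>log 2 (real N)\<rfloor>"
  have N1: "real N \<ge> 1" using N0 unfolding N_def by (simp add: Suc_le_eq)
  have lg0: "log 2 (real N) \<ge> 0" using N1 by simp
  have Kr: "real K \<le> log 2 (real N)" "log 2 (real N) < real K + 1" unfolding K_def using lg0 by linarith+
  have pK: "real (2^K) \<le> real N"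
  proof -
    have "real (2^K) = 2 powr (real K)" by (simp add: powr_realpow)
    also have "\<dots> \<le> 2 powr (log 2 (real N))" using Kr(1) by (intro powr_mono) auto
    also have "\<dots> = real N" using N1 by simp
    finally show ?thesis .
  qed
  have pK1: "real N < 2 * 2^K"
  proof -
    have "real N = 2 powr (log 2 (real N))" using N1 by simp
    also have "\<dots> < 2 powr (real K + 1)" using Kr(2) by (intro powr_less_mono) auto
    also have "\<dots> = 2 * 2^K" by (simp add: powr_add powr_realpow)
    finally show ?thesis .
  qed
  define Y where "Y k = (step^^k) X" for k
  define \<delta> :: "bool list \<Rightarrow> real" where "\<delta> Z = 30 * sqrt (r * real (length Z))" for Z
  have C1: "C_OP X = (\<Sum>k<K. length (Y k) div 2)" unfolding C_OP_eq K_def N_def Y_def ..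
  have d1: "(\<Sum>k<K. length (Y k) div 2) + (\<Sum>k<K. Rc (Y k)) + length (Y K) \<le> N"
    using D1[where K=K and Y=X] unfolding Y_def N_def .
  then have C2: "real (C_OP X) \<le> real N - real (\<Sum>k<K. Rc (Y k))" unfolding C1 by linarith
  have hyp: "\<forall>k<K. real (Rc ((step^^k) X)) \<ge> real (mm ((step^^k) X)) / 2 - \<delta> ((step^^k) X)"
    using good unfolding K_def N_def badY_def \<delta>_def by (auto simp: not_less)
  have d2: "real (\<Sum>k<K. Rc (Y k)) \<ge> 2/3 * real (mm X) - (\<Sum>k<K. (2 * \<delta> (Y k) + 1) / 3) - 2/3 * real (mm (Y K))"
    using D2[OF hyp] unfolding Y_def .
  have lenK: "real (length (Y K)) \<le> real N / 2^K" using len_funpow[where k=K and Y=X] unfolding Y_def N_def .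
  have "real (length (Y K)) < 2"
  proof -
    have "real N / 2^K < 2" using pK1 by (simp add: field_simps)
    then show ?thesis using lenK by linarith
  qed
  then have "mm (Y K) = 0" by (intro mm_short) simp
  then have d3: "real (\<Sum>k<K. Rc (Y k)) \<ge> 2/3 * real (mm X) - (\<Sum>k<K. (2 * \<delta> (Y k) + 1) / 3)"
    using d2 by simp
  have sd: "(\<Sum>k<K. (2 * \<delta> (Y k) + 1) / 3) = 2/3 * (\<Sum>k<K. \<delta> (Y k)) + real K / 3"
    by (simp add: sum.distrib sum_divide_distrib[symmetric] sum_distrib_left)
  have dk: "\<delta> (Y k) \<le> 30 * sqrt (r * real N) * sqrt (1/2) ^ k" for k
  proof -
    have "r * real (length (Y k)) \<le> r * (real N / 2^k)"
      using len_funpow[where k=k and Y=X] r1 unfolding Y_def N_def by (intro mult_left_mono) auto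
    then have "sqrt (r * real (length (Y k))) \<le> sqrt (r * (real N / 2^k))" by simp
    also have "\<dots> = sqrt (r * real N) * sqrt (1/2) ^ k"
      by (simp add: real_sqrt_mult real_sqrt_divide real_sqrt_power power_divide field_simps)
    finally show ?thesis unfolding \<delta>_def by simp
  qed
  have sdel: "(\<Sum>k<K. \<delta> (Y k)) \<le> 105 * sqrt (r * real N)"
  proof -
    have "(\<Sum>k<K. \<delta> (Y k)) \<le> (\<Sum>k<K. 30 * sqrt (r * real N) * sqrt (1/2) ^ k)"
      by (rule sum_mono) (rule dk)
    also have "\<dots> = 30 * sqrt (r * real N) * (\<Sum>k<K. sqrt (1/2) ^ k)" by (simp add: sum_distrib_left)
    also have "\<dots> \<le> 30 * sqrt (r * real N) * (7/2)" using geo_sqrt[of K] r1 N1 by (intro mult_left_mono) auto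
    finally show ?thesis by simp
  qed
  have Kb: "real K \<le> 4 * sqrt (r * real N)"
  proof -
    have "real ((K+2)^2) \<le> real (16 * 2^K)" using sq_bound[of K] by (simp only: of_nat_le_iff)
    also have "\<dots> \<le> 16 * real N" using pK by simp
    finally have "(real K + 2)^2 \<le> 16 * real N" by (simp add: add.commute)
    then have "real K + 2 \<le> sqrt (16 * real N)" by (rule real_le_rsqrt)
    then have "real K + 2 \<le> 4 * sqrt (real N)" by (simp add: real_sqrt_mult)
    moreover have "sqrt (real N) \<le> sqrt (r * real N)" using r1 N1 by simp
    ultimately show ?thesis by linarith
  qed
  have pos: "sqrt (r * real N) > 0" using r1 N1 by simp
  show ?thesis unfolding N_def[symmetric] using C2 d3 sd sdel Kb pos by linarith
qed


lemma count_rep: "count_list (replicate n x) y = (if x = y then n else 0)"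
  by (induction n) auto

theorem mainTheorem4:
  "\<exists>d::real. \<forall>N A B :: nat. \<forall>r::real.
     N > 0 \<longrightarrow> A + B = N \<longrightarrow> r \<ge> 1 \<longrightarrow>
     real (card {X \<in> strings_with_ones N A.
              real (C_OP X) \<ge> real N - 2/3 * real (min A B) + d * sqrt (r * real N)})
       / real (card (strings_with_ones N A))
     \<le> 2 powr (-r) * log 2 (real N)"
proof (intro exI[of _ 72] allI impI)
  fix N A B :: nat and r :: real
  assume N0: "N > 0" and AB: "A + B = N" and r1: "r \<ge> 1"
  define K where "K = nat \<lfloor>log 2 (real N)\<rfloor>"
  let ?S = "strings_with_ones N A"
  let ?Bad = "{X \<in> ?S. real (C_OP X) \<ge> real N - 2/3 * real (min A B) + 72 * sqrt (r * real N)}"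
  have sub: "?Bad \<subseteq> (\<Union>k\<in>{..<K}. {X \<in> ?S. badY r ((step^^k) X)})"
  proof
    fix X assume X: "X \<in> ?Bad"
    then have len: "length X = N" and cA: "count_list X True = A" unfolding strings_with_ones_def by auto
    have "count_list X False = B" using count_tf[of X] len cA AB by simp
    then have mmX: "mm X = min A B" unfolding mm_def cA by simp
    show "X \<in> (\<Union>k\<in>{..<K}. {X \<in> ?S. badY r ((step^^k) X)})"
    proof (rule ccontr)
      assume "X \<notin> (\<Union>k\<in>{..<K}. {X \<in> ?S. badY r ((step^^k) X)})"
      then have good: "\<forall>k < nat \<lfloor>log 2 (real (length X))\<rfloor>. \<not> badY r ((step^^k) X)"
        using X len unfolding K_def by auto
      have "real (C_OP X) < real (length X) - 2/3 * real (mm X) + 72 * sqrt (r * real (length X))"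
        using det_bound[OF r1 _ good] len N0 by simp
      then show False using X len mmX by simp
    qed
  qed
  have finS: "finite ?S" using finite_S[of N A "\<lambda>_. True"] by simp
  have "real (card ?Bad) \<le> real (card (\<Union>k\<in>{..<K}. {X \<in> ?S. badY r ((step^^k) X)}))"
    using sub by (intro of_nat_mono card_mono) (auto intro: finite_S)
  also have "\<dots> \<le> real (\<Sum>k<K. card {X \<in> ?S. badY r ((step^^k) X)})"
    by (intro of_nat_mono card_UN_le) simp
  also have "\<dots> = (\<Sum>k<K. real (card {X \<in> ?S. badY r ((step^^k) X)}))" by simp
  also have "\<dots> \<le> (\<Sum>k<K. 2 powr (-r) * real (card ?S))"
    by (rule sum_mono) (rule levelK[OF r1])
  also have "\<dots> = real K * (2 powr (-r) * real (card ?S))" by simp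
  finally have cb: "real (card ?Bad) \<le> real K * (2 powr (-r) * real (card ?S))" .
  have "replicate A True @ replicate B False \<in> ?S" unfolding strings_with_ones_def using AB by (simp add: count_rep)
  then have cpos: "real (card ?S) > 0" using finS card_gt_0_iff by fastforce
  have N1: "real N \<ge> 1" using N0 by simp
  have Klog: "real K \<le> log 2 (real N)" unfolding K_def using N1 by simp
  have "real (card ?Bad) / real (card ?S) \<le> real K * 2 powr (-r)"
    using cb cpos by (simp add: field_simps)
  also have "\<dots> \<le> log 2 (real N) * 2 powr (-r)" using Klog by (intro mult_right_mono) auto
  finally show "real (card ?Bad) / real (card ?S) \<le> 2 powr (-r) * log 2 (real N)" by (simp add: mult.commute)
qed

end
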